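(* Let $n\ge0$ and let $f^{n+1}_1,\ldots,f^{n+1}_{n+1}$ be Alpert multiwavelets of multiplicity $n+1$. Let $c$ be the real constant with $f^{n+1}_{n+1}(x)=c\,p_n(x)$ for $x\in(0,1)$. Then for all real $t$, \[ \int_{-1}^1 f^{n+1}_{n+1}(x)e^{ixt}\,dx=2ic\,t^{2n+1}\frac{(-1)^n n!}{(3n+2)!}\,{}_1F_2\!\left(\begin{matrix}n+1\\ \frac{3n+3}2,\,\frac{3n+4}2\end{matrix};-\frac{t^2}4\right). \] If $n\ge1$ and $d$ is the real constant with $f^{n+1}_{n}(x)=d\,q_n(x)$ for $x\in(0,1)$, then for all real $t$, \[ \int_{-1}^1 f^{n+1}_{n}(x)e^{ixt}\,dx=2d\,t^{2n}\frac{(-1)^n n!}{(3n+1)!}\,{}_1F_2\!\left(\begin{matrix}n+1\\ \frac{3n+2}2,\,\frac{3n+3}2\end{matrix};-\frac{t^2}4\right). \]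
   Context: Alpert multiwavelets of multiplicity $N\in\mathbb{N}$: real functions $f^N_1,\ldots,f^N_N$ supported on $[-1,1]$ such that (i) the restriction of each $f^N_i$ to $(0,1)$ is a polynomial of degree at most $N-1$; (ii) $f^N_k(-t)=(-1)^{k+N-1}f^N_k(t)$ for $t\in(0,1)$; (iii) $\int_{-1}^1 f^N_i f^N_j\,dt=\delta_{i,j}$; (iv) $\int_{-1}^1 f^N_k(t)t^i\,dt=0$ for $i=0,\ldots,k+N-2$. (On $(0,1)$, $f^{n+1}_{n+1}$ is a constant multiple of $p_n$ and, for $n\ge1$, $f^{n+1}_n$ is a constant multiple of $q_n$.) Pochhammer symbol: $(a)_0=1$, $(a)_n=a(a+1)\cdots(a+n-1)$; $\binom{n+a}{n}:=\frac{(a+1)_n}{n!}$. $p_n(x)=\sum_{k=0}^n\binom nk\binom{n+\frac k2}{n}(-1)^{n-k}x^k$, $q_n(x)=\sum_{k=0}^n\binom nk\binom{n+\frac{k-1}2}{n}(-1)^{n-k}x^k$. ${}_1F_2(a;b_1,b_2;z)=\sum_{j\ge0}\frac{(a)_j}{(b_1)_j(b_2)_j\,j!}z^j$. *)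

theory Defs
  imports "HOL-Analysis.Analysis" "HOL-Computational_Algebra.Polynomial"
begin

text \<open>Generalized binomial coefficient binom(n+a, n) := (a+1)_n / n!.\<close>
definition gbinom :: "nat \<Rightarrow> real \<Rightarrow> real" where
  "gbinom n a = pochhammer (a + 1) n / fact n"

definition alpert_p :: "nat \<Rightarrow> real \<Rightarrow> real" where
  "alpert_p n x = (\<Sum>k=0..n. real (n choose k) * gbinom n (real k / 2) * (-1) ^ (n - k) * x ^ k)"

definition alpert_q :: "nat \<Rightarrow> real \<Rightarrow> real" where
  "alpert_q n x = (\<Sum>k=0..n. real (n choose k) * gbinom n ((real k - 1) / 2) * (-1) ^ (n - k) * x ^ k)"

definition hyp1F2 :: "real \<Rightarrow> real \<Rightarrow> real \<Rightarrow> real \<Rightarrow> real" where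
  "hyp1F2 a b1 b2 z = (\<Sum>j. pochhammer a j / (pochhammer b1 j * pochhammer b2 j * fact j) * z ^ j)"

definition alpert_multiwavelets :: "nat \<Rightarrow> (nat \<Rightarrow> real \<Rightarrow> real) \<Rightarrow> bool" where
  "alpert_multiwavelets N f \<longleftrightarrow>
     (\<forall>k\<in>{1..N}. \<forall>t. t \<notin> {-1..1} \<longrightarrow> f k t = 0) \<and>
     (\<forall>k\<in>{1..N}. \<exists>P :: real poly. degree P \<le> N - 1 \<and> (\<forall>t\<in>{0<..<1}. f k t = poly P t)) \<and>
     (\<forall>k\<in>{1..N}. \<forall>t\<in>{0<..<1}. f k (-t) = (-1) ^ (k + N - 1) * f k t) \<and>
     (\<forall>i\<in>{1..N}. \<forall>j\<in>{1..N}. integral {-1..1} (\<lambda>t. f i t * f j t) = (if i = j then 1 else 0)) \<and>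
     (\<forall>k\<in>{1..N}. \<forall>i\<in>{0..k + N - 2}. integral {-1..1} (\<lambda>t. f k t * t ^ i) = 0)"

end

theory Submission
  imports Defs
begin


lemma pascal_sum:
  fixes g :: "nat \<Rightarrow> real"
  shows "(\<Sum>k\<le>Suc n. real (Suc n choose k) * (-1)^k * g k) =
    (\<Sum>k\<le>n. real (n choose k) * (-1)^k * g k) - (\<Sum>k\<le>n. real (n choose k) * (-1)^k * g (Suc k))"
proof -
  have "(\<Sum>k\<le>Suc n. real (Suc n choose k) * (-1)^k * g k) =
      g 0 + (\<Sum>k\<le>n. real (Suc n choose Suc k) * (-1)^(Suc k) * g (Suc k))"
    by (subst sum.atMost_Suc_shift) simp
  also have "\<dots> = g 0 + (\<Sum>k\<le>n. real (n choose Suc k) * (-1)^(Suc k) * g (Suc k))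
        - (\<Sum>k\<le>n. real (n choose k) * (-1)^k * g (Suc k))"
  proof -
    have "real (Suc n choose Suc k) * (-1)^(Suc k) * g (Suc k) =
        real (n choose Suc k) * (-1)^(Suc k) * g (Suc k) - real (n choose k) * (-1)^k * g (Suc k)" for k
      by (simp add: algebra_simps)
    then show ?thesis by (simp add: sum_subtractf)
  qed
  also have "g 0 + (\<Sum>k\<le>n. real (n choose Suc k) * (-1)^(Suc k) * g (Suc k))
      = (\<Sum>k\<le>Suc n. real (n choose k) * (-1)^k * g k)"
    by (simp only: sum.atMost_Suc_shift) simp
  also have "\<dots> = (\<Sum>k\<le>n. real (n choose k) * (-1)^k * g k)"
    by simp
  finally show ?thesis .
qed

lemma alt_sum_monomial:
  "i < n \<Longrightarrow> (\<Sum>k\<le>n. real (n choose k) * (-1)^k * real k ^ i) = 0"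
proof (induction n arbitrary: i)
  case 0 then show ?case by simp
next
  case (Suc n)
  have IH: "\<And>l. l < i \<Longrightarrow> (\<Sum>k\<le>n. real (n choose k) * (-1)^k * real k ^ l) = 0"
    using Suc by simp
  have e: "(1 + real k) ^ i = real k ^ i + (\<Sum>l<i. real (i choose l) * real k ^ l)" for k
  proof -
    have "(1 + real k) ^ i = (real k + 1) ^ i" by (simp add: add.commute)
    also have "\<dots> = (\<Sum>l\<le>i. real (i choose l) * real k ^ l)"
      by (simp add: binomial_ring)
    also have "\<dots> = real k ^ i + (\<Sum>l<i. real (i choose l) * real k ^ l)"
      by (simp add: lessThan_Suc_atMost[symmetric])
    finally show ?thesis .
  qed
  define X where "X k l = real (n choose k) * (-1)^k * real k ^ l" for k l
  have pt: "real (n choose k) * (-1)^k * real (Suc k) ^ i = X k i + (\<Sum>l<i. real (i choose l) * X k l)" for k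
    unfolding X_def by (simp add: e sum_distrib_left algebra_simps)
  have z: "(\<Sum>k\<le>n. \<Sum>l<i. real (i choose l) * X k l) = 0"
  proof -
    have "(\<Sum>k\<le>n. \<Sum>l<i. real (i choose l) * X k l) = (\<Sum>l<i. \<Sum>k\<le>n. real (i choose l) * X k l)"
      by (rule sum.swap)
    also have "\<dots> = (\<Sum>l<i. real (i choose l) * (\<Sum>k\<le>n. X k l))"
      by (simp only: sum_distrib_left)
    also have "\<dots> = 0"
      by (intro sum.neutral) (simp add: IH X_def)
    finally show ?thesis .
  qed
  have "(\<Sum>k\<le>n. real (n choose k) * (-1)^k * real (Suc k) ^ i) = (\<Sum>k\<le>n. X k i)"
    by (simp only: pt sum.distrib z)
  then show ?case
    using pascal_sum[of n "\<lambda>k. real k ^ i"] by (simp add: X_def)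
qed

lemma alt_sum_poly:
  fixes H :: "real poly"
  assumes "degree H < n"
  shows "(\<Sum>k\<le>n. real (n choose k) * (-1)^k * poly H (real k)) = 0"
proof -
  have "(\<Sum>k\<le>n. real (n choose k) * (-1)^k * poly H (real k))
     = (\<Sum>i\<le>degree H. coeff H i * (\<Sum>k\<le>n. real (n choose k) * (-1)^k * real k ^ i))"
  proof -
    have "(\<Sum>k\<le>n. real (n choose k) * (-1)^k * poly H (real k))
       = (\<Sum>k\<le>n. \<Sum>i\<le>degree H. coeff H i * (real (n choose k) * (-1)^k * real k ^ i))"
      by (simp add: poly_altdef sum_distrib_left algebra_simps)
    also have "\<dots> = (\<Sum>i\<le>degree H. \<Sum>k\<le>n. coeff H i * (real (n choose k) * (-1)^k * real k ^ i))"
      by (rule sum.swap)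
    also have "\<dots> = (\<Sum>i\<le>degree H. coeff H i * (\<Sum>k\<le>n. real (n choose k) * (-1)^k * real k ^ i))"
      by (simp only: sum_distrib_left)
    finally show ?thesis .
  qed
  also have "\<dots> = 0"
    using assms by (intro sum.neutral) (simp add: alt_sum_monomial)
  finally show ?thesis .
qed

lemma alt_sum_inv:
  fixes a :: real
  assumes "a > 0"
  shows "(\<Sum>k\<le>n. real (n choose k) * (-1)^k * (1 / (real k + a))) = fact n / pochhammer a (Suc n)"
  using assms
proof (induction n arbitrary: a)
  case 0 then show ?case by simp
next
  case (Suc n)
  have "(\<Sum>k\<le>Suc n. real (Suc n choose k) * (-1)^k * (1 / (real k + a)))
     = fact n / pochhammer a (Suc n) - fact n / pochhammer (a+1) (Suc n)"
    using pascal_sum[of n "\<lambda>k. 1 / (real k + a)"] Suc.IH[of a] Suc.IH[of "a+1"] Suc.prems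
    by (simp add: algebra_simps)
  also have "\<dots> = fact (Suc n) / pochhammer a (Suc (Suc n))"
  proof -
    have p1: "pochhammer a (Suc n) = a * pochhammer (a+1) n" by (rule pochhammer_rec)
    have p2: "pochhammer (a+1) (Suc n) = pochhammer (a+1) n * (a + 1 + real n)" by (rule pochhammer_Suc)
    have p3: "pochhammer a (Suc (Suc n)) = a * (pochhammer (a+1) n * (a + 1 + real n))"
      by (subst pochhammer_rec) (simp add: p2)
    have pos: "pochhammer (a+1) n > 0" using Suc.prems by (intro pochhammer_pos) simp
    define P where "P = pochhammer (a+1) n"
    have pos': "a + 1 + real n > 0" using Suc.prems by simp
    have q: "1 / a - 1 / (a + 1 + real n) = (real n + 1) / (a * (a + 1 + real n))"
      using pos' Suc.prems by (simp add: field_simps)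
    have Pp: "P > 0" unfolding P_def using pos .
    have "fact n / (a * P) - fact n / (P * (a + 1 + real n)) = (fact n / P) * (1 / a - 1 / (a + 1 + real n))"
      by (simp add: right_diff_distrib ac_simps)
    also have "\<dots> = fact (Suc n) / (a * (P * (a + 1 + real n)))"
      unfolding q by (simp add: algebra_simps)
    finally have "fact n / (a * P) - fact n / (P * (a + 1 + real n)) = fact (Suc n) / (a * (P * (a + 1 + real n)))" .
    then show ?thesis unfolding p1 p2 p3 P_def .
  qed
  finally show ?case .
qed

lemma alt_sum_poly_div:
  fixes P :: "real poly" and a :: real
  assumes "a > 0" "degree P \<le> n"
  shows "(\<Sum>k\<le>n. real (n choose k) * (-1)^k * (poly P (real k) / (real k + a)))
       = poly P (-a) * fact n / pochhammer a (Suc n)"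
proof (cases "n = 0")
  case True
  then have "degree P = 0" using assms by simp
  then obtain c where "P = [:c:]" by (metis degree_eq_zeroE)
  then show ?thesis using True by simp
next
  case False
  define H where "H = synthetic_div P (-a)"
  have PH: "[:a, 1:] * H + [:poly P (-a):] = P"
    using synthetic_div_correct'[of "-a" P] by (simp add: H_def)
  have ev: "poly P x = (x + a) * poly H x + poly P (-a)" for x
    by (subst PH[symmetric]) (simp add: algebra_simps)
  have dH: "degree H < n" using False assms by (simp add: H_def degree_synthetic_div)
  have "(\<Sum>k\<le>n. real (n choose k) * (-1)^k * (poly P (real k) / (real k + a)))
      = (\<Sum>k\<le>n. real (n choose k) * (-1)^k * poly H (real k))
        + poly P (-a) * (\<Sum>k\<le>n. real (n choose k) * (-1)^k * (1 / (real k + a)))"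
  proof -
    have "poly P (real k) / (real k + a) = poly H (real k) + poly P (-a) * (1 / (real k + a))" for k
      unfolding ev[of "real k"] using assms(1) by (simp add: field_simps)
    then show ?thesis by (simp add: algebra_simps sum.distrib sum_distrib_left)
  qed
  also have "\<dots> = poly P (-a) * fact n / pochhammer a (Suc n)"
    using alt_sum_poly[OF dH] alt_sum_inv[OF assms(1)] by simp
  finally show ?thesis .
qed




definition PP :: "nat \<Rightarrow> real poly" where
  "PP n = smult (1 / fact n) (\<Prod>i<n. [:1 + real i, 1/2:])"
definition QQ :: "nat \<Rightarrow> real poly" where
  "QQ n = smult (1 / fact n) (\<Prod>i<n. [:1/2 + real i, 1/2:])"

lemma poly_PP: "poly (PP n) x = pochhammer (x/2 + 1) n / fact n"
  by (simp add: PP_def poly_prod pochhammer_prod atLeast0LessThan algebra_simps)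

lemma poly_QQ: "poly (QQ n) x = pochhammer (x/2 + 1/2) n / fact n"
  by (simp add: QQ_def poly_prod pochhammer_prod atLeast0LessThan algebra_simps)

lemma degree_lin_le: "degree [:a, b:] \<le> 1"
  by (simp add: degree_pCons_le)

lemma degree_PP: "degree (PP n) \<le> n"
proof -
  have "degree (\<Prod>i<n. [:1 + real i, 1/2:]) \<le> (\<Sum>i<n. degree [:1 + real i, 1/2::real:])"
    using degree_prod_sum_le[of "{..<n}" "\<lambda>i. [:1 + real i, 1/2::real:]"] by (simp add: o_def)
  also have "\<dots> \<le> (\<Sum>i<n. 1)" by (intro sum_mono) (simp only: degree_lin_le)
  finally show ?thesis unfolding PP_def using degree_smult_le order_trans by fastforce
qed

lemma degree_QQ: "degree (QQ n) \<le> n"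
proof -
  have "degree (\<Prod>i<n. [:1/2 + real i, 1/2:]) \<le> (\<Sum>i<n. degree [:1/2 + real i, 1/2::real:])"
    using degree_prod_sum_le[of "{..<n}" "\<lambda>i. [:1/2 + real i, 1/2::real:]"] by (simp add: o_def)
  also have "\<dots> \<le> (\<Sum>i<n. 1)" by (intro sum_mono) (simp only: degree_lin_le)
  finally show ?thesis unfolding QQ_def using degree_smult_le order_trans by fastforce
qed

lemma gbinom_PP: "gbinom n (real k / 2) = poly (PP n) (real k)"
  by (simp add: gbinom_def poly_PP)

lemma gbinom_QQ: "gbinom n ((real k - 1) / 2) = poly (QQ n) (real k)"
proof -
  have "(real k - 1) / 2 + 1 = real k / 2 + 1/2" by (simp add: field_simps)
  then show ?thesis by (simp add: gbinom_def poly_QQ)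
qed

lemma neg1_pow_diff: "k \<le> n \<Longrightarrow> (-1::real)^(n-k) = (-1)^n * (-1)^k"
proof -
  assume "k \<le> n"
  then obtain d where n: "n = k + d" using le_Suc_ex by blast
  have "(-1::real)^k * (-1)^k = 1" by (simp add: power_mult_distrib[symmetric])
  then show ?thesis unfolding n by (simp add: power_add algebra_simps)
qed

lemma has_integral_monomial: "((\<lambda>x::real. x^m) has_integral (1 / (real m + 1))) {0..1}"
proof -
  have "((\<lambda>x::real. x^m) has_integral ((\<lambda>x. x^Suc m / real (Suc m)) 1 - (\<lambda>x. x^Suc m / real (Suc m)) 0)) {0..1}"
  proof (rule fundamental_theorem_of_calculus)
    fix x :: real
    have "((\<lambda>x. x^Suc m / real (Suc m)) has_real_derivative x^m) (at x within {0..1})"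
      using DERIV_cdivide[OF DERIV_pow[of "Suc m" x "{0..1}"], of "real (Suc m)"]
      by (simp del: of_nat_Suc)
    then show "((\<lambda>x. x^Suc m / real (Suc m)) has_vector_derivative x^m) (at x within {0..1})"
      by (simp add: has_real_derivative_iff_has_vector_derivative)
  qed simp
  then show ?thesis by (simp add: add.commute)
qed

lemma mom_p: "((\<lambda>x. alpert_p n x * x^m) has_integral
   (\<Sum>k=0..n. real (n choose k) * gbinom n (real k / 2) * (-1)^(n-k) * (1 / (real (k + m) + 1)))) {0..1}"
proof -
  have eq: "alpert_p n x * x^m = (\<Sum>k=0..n. real (n choose k) * gbinom n (real k / 2) * (-1)^(n-k) * x^(k+m))" for x
    by (simp add: alpert_p_def sum_distrib_right power_add mult.assoc)
  show ?thesis unfolding eq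
    by (intro has_integral_sum has_integral_mult_right has_integral_monomial) simp
qed

lemma mom_q: "((\<lambda>x. alpert_q n x * x^m) has_integral
   (\<Sum>k=0..n. real (n choose k) * gbinom n ((real k - 1) / 2) * (-1)^(n-k) * (1 / (real (k + m) + 1)))) {0..1}"
proof -
  have eq: "alpert_q n x * x^m = (\<Sum>k=0..n. real (n choose k) * gbinom n ((real k - 1) / 2) * (-1)^(n-k) * x^(k+m))" for x
    by (simp add: alpert_q_def sum_distrib_right power_add mult.assoc)
  show ?thesis unfolding eq
    by (intro has_integral_sum has_integral_mult_right has_integral_monomial) simp
qed

lemma mom_val_gen:
  fixes P :: "nat \<Rightarrow> real poly" and g :: "nat \<Rightarrow> real"
  assumes "degree Q \<le> n" and g: "\<And>k. g k = poly Q (real k)"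
  shows "(\<Sum>k=0..n. real (n choose k) * g k * (-1)^(n-k) * (1 / (real (k + m) + 1)))
     = (-1)^n * (poly Q (-(real m + 1)) * fact n / pochhammer (real m + 1) (Suc n))"
proof -
  have "(\<Sum>k=0..n. real (n choose k) * g k * (-1)^(n-k) * (1 / (real (k + m) + 1)))
      = (-1)^n * (\<Sum>k\<le>n. real (n choose k) * (-1)^k * (poly Q (real k) / (real k + (real m + 1))))"
    unfolding sum_distrib_left atLeast0AtMost
    by (intro sum.cong refl) (simp add: g neg1_pow_diff algebra_simps)
  also have "\<dots> = (-1)^n * (poly Q (-(real m + 1)) * fact n / pochhammer (real m + 1) (Suc n))"
    by (subst alt_sum_poly_div) (use assms in auto)
  finally show ?thesis .
qed

lemma mom_p_val:
  "(\<Sum>k=0..n. real (n choose k) * gbinom n (real k / 2) * (-1)^(n-k) * (1 / (real (k + 2*j+1) + 1)))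
     = (-1)^n * pochhammer (- real j) n / pochhammer (2 * real j + 2) (Suc n)"
proof -
  have "(\<Sum>k=0..n. real (n choose k) * gbinom n (real k / 2) * (-1)^(n-k) * (1 / (real (k + (2*j+1)) + 1)))
     = (-1)^n * (poly (PP n) (-(real (2*j+1) + 1)) * fact n / pochhammer (real (2*j+1) + 1) (Suc n))"
    by (rule mom_val_gen[OF degree_PP gbinom_PP])
  also have "poly (PP n) (-(real (2*j+1) + 1)) = pochhammer (- real j) n / fact n"
  proof -
    have "(-(real (2*j+1) + 1)) / 2 + 1 = - real j" by (simp add: field_simps)
    then show ?thesis by (simp only: poly_PP)
  qed
  finally show ?thesis by (simp add: add.assoc algebra_simps)
qed

lemma mom_q_val:
  "(\<Sum>k=0..n. real (n choose k) * gbinom n ((real k - 1) / 2) * (-1)^(n-k) * (1 / (real (k + 2*j) + 1)))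
     = (-1)^n * pochhammer (- real j) n / pochhammer (2 * real j + 1) (Suc n)"
proof -
  have "(\<Sum>k=0..n. real (n choose k) * gbinom n ((real k - 1) / 2) * (-1)^(n-k) * (1 / (real (k + 2*j) + 1)))
     = (-1)^n * (poly (QQ n) (-(real (2*j) + 1)) * fact n / pochhammer (real (2*j) + 1) (Suc n))"
    by (rule mom_val_gen[OF degree_QQ gbinom_QQ])
  also have "poly (QQ n) (-(real (2*j) + 1)) = pochhammer (- real j) n / fact n"
  proof -
    have "(-(real (2*j) + 1)) / 2 + 1/2 = - real j" by (simp add: field_simps)
    then show ?thesis by (simp only: poly_QQ)
  qed
  finally show ?thesis by (simp add: algebra_simps)
qed




lemma series_integral:
  fixes u :: "nat \<Rightarrow> real \<Rightarrow> real" and r U :: "real \<Rightarrow> real" and M :: "nat \<Rightarrow> real"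
  assumes sums: "\<And>x. x \<in> {0..1} \<Longrightarrow> (\<lambda>j. u j x) sums U x"
    and cont: "\<And>j. continuous_on {0..1} (u j)"
    and bound: "\<And>j x. x \<in> {0..1} \<Longrightarrow> \<bar>u j x\<bar> \<le> M j" and sM: "summable M"
    and r: "continuous_on {0..1} r"
  shows "(\<lambda>j. integral {0..1} (\<lambda>x. r x * u j x)) sums integral {0..1} (\<lambda>x. r x * U x)"
    and "(\<lambda>x. r x * U x) integrable_on {0..1}"
proof -
  define F where "F k x = (\<Sum>j<k. r x * u j x)" for k x
  have ruint: "(\<lambda>x. r x * u j x) integrable_on {0..1}" for j
    by (intro integrable_continuous_interval continuous_on_mult r cont)
  have Fint: "F k integrable_on {0..1}" for k
    unfolding F_def by (intro integrable_sum ruint) simp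
  have M0: "0 \<le> M j" for j
  proof -
    have "\<bar>u j 0\<bar> \<le> M j" by (rule bound) simp
    then show ?thesis using abs_ge_zero[of "u j 0"] by linarith
  qed
  define h where "h x = \<bar>r x\<bar> * suminf M" for x
  have hint: "h integrable_on {0..1}"
    unfolding h_def by (intro integrable_continuous_interval continuous_intros r)
  have le: "norm (F k x) \<le> h x" if x: "x \<in> {0..1}" for k x
  proof -
    have "norm (F k x) = \<bar>r x\<bar> * \<bar>\<Sum>j<k. u j x\<bar>"
      by (simp add: F_def sum_distrib_left[symmetric] abs_mult)
    also have "\<dots> \<le> \<bar>r x\<bar> * (\<Sum>j<k. M j)"
    proof (rule mult_left_mono)
      have "\<bar>\<Sum>j<k. u j x\<bar> \<le> (\<Sum>j<k. \<bar>u j x\<bar>)" by (rule sum_abs)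
      also have "\<dots> \<le> (\<Sum>j<k. M j)" by (intro sum_mono bound x)
      finally show "\<bar>\<Sum>j<k. u j x\<bar> \<le> (\<Sum>j<k. M j)" .
    qed simp
    also have "\<dots> \<le> \<bar>r x\<bar> * suminf M"
      by (intro mult_left_mono sum_le_suminf sM) (auto simp: M0)
    finally show ?thesis by (simp add: h_def)
  qed
  have conv: "(\<lambda>k. F k x) \<longlonglongrightarrow> r x * U x" if "x \<in> {0..1}" for x
    using sums_mult[OF sums[OF that], of "r x"] unfolding sums_def F_def .
  have lim: "(\<lambda>k. integral {0..1} (F k)) \<longlonglongrightarrow> integral {0..1} (\<lambda>x. r x * U x)"
    and gi: "(\<lambda>x. r x * U x) integrable_on {0..1}"
    using dominated_convergence[OF Fint hint le conv] by auto
  have "integral {0..1} (F k) = (\<Sum>j<k. integral {0..1} (\<lambda>x. r x * u j x))" for k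
    unfolding F_def by (intro integral_sum ruint) simp
  then show "(\<lambda>j. integral {0..1} (\<lambda>x. r x * u j x)) sums integral {0..1} (\<lambda>x. r x * U x)"
    using lim unfolding sums_def by simp
  show "(\<lambda>x. r x * U x) integrable_on {0..1}" by (rule gi)
qed

lemma summable_odd_exp: "summable (\<lambda>j. \<bar>t\<bar>^(2*j+1) / fact (2*j+1) :: real)"
proof (rule summable_comparison_test')
  show "summable (\<lambda>j. \<bar>t\<bar> * (inverse (fact j) * (t^2)^j))"
    by (intro summable_mult summable_exp)
  fix j :: nat
  have f: "fact j \<le> (fact (2*j+1) :: real)" by (intro fact_mono) simp
  have e: "\<bar>t\<bar>^(2*j) = (t^2)^j" by (metis power2_abs power_mult)
  have "\<bar>t\<bar>^(2*j+1) = \<bar>t\<bar> * (t^2)^j"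
    by (simp only: power_add e power_one_right) (rule mult.commute)
  then have "norm (\<bar>t\<bar>^(2*j+1) / fact (2*j+1)) = \<bar>t\<bar> * (t^2)^j / fact (2*j+1)" by simp
  also have "\<dots> \<le> \<bar>t\<bar> * (t^2)^j / fact j"
    by (rule divide_left_mono[OF f]) auto
  finally show "norm (\<bar>t\<bar>^(2*j+1) / fact (2*j+1)) \<le> \<bar>t\<bar> * (inverse (fact j) * (t^2)^j)"
    by (simp add: divide_inverse mult_ac)
qed

lemma summable_even_exp: "summable (\<lambda>j. \<bar>t\<bar>^(2*j) / fact (2*j) :: real)"
proof (rule summable_comparison_test')
  show "summable (\<lambda>j. inverse (fact j) * (t^2)^j)"
    by (intro summable_exp)
  fix j :: nat
  have f: "fact j \<le> (fact (2*j) :: real)" by (intro fact_mono) simp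
  have "\<bar>t\<bar>^(2*j) = (t^2)^j"
    by (simp add: power_mult power2_abs)
  then show "norm (\<bar>t\<bar>^(2*j) / fact (2*j)) \<le> inverse (fact j) * (t^2)^j"
    using f by (simp add: divide_inverse mult_left_mono mult_right_mono le_imp_inverse_le mult.commute)
qed

lemma pow_bound: "x \<in> {0..1::real} \<Longrightarrow> \<bar>c * (x * t) ^ k\<bar> \<le> \<bar>c\<bar> * \<bar>t\<bar>^k"
proof -
  assume x: "x \<in> {0..1::real}"
  have "\<bar>x\<bar>^k \<le> 1" using x by (intro power_le_one) auto
  then have "\<bar>x\<bar>^k * \<bar>t\<bar>^k \<le> \<bar>t\<bar>^k" by (simp add: mult_left_le_one_le)
  then show ?thesis by (simp add: abs_mult power_abs power_mult_distrib mult_left_mono)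
qed

lemma sin_series_integral:
  fixes r :: "real \<Rightarrow> real"
  assumes r: "continuous_on {0..1} r"
  shows "(\<lambda>j. integral {0..1} (\<lambda>x. r x * ((-1)^j / fact (2*j+1) * (x*t)^(2*j+1))))
           sums integral {0..1} (\<lambda>x. r x * sin (x*t))"
    and "(\<lambda>x. r x * sin (x*t)) integrable_on {0..1}"
proof -
  have b: "\<bar>(-1)^j / fact (2*j+1) * (x*t)^(2*j+1)\<bar> \<le> \<bar>t\<bar>^(2*j+1) / fact (2*j+1)"
    if "x \<in> {0..1}" for j x
    using pow_bound[OF that, of "(-1)^j / fact (2*j+1)" t "2*j+1"] by simp
  have c: "\<And>j. continuous_on {0..1} (\<lambda>x. (-1)^j / fact (2*j+1) * (x*t)^(2*j+1))"
    by (intro continuous_intros)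
  have s: "\<And>x. x \<in> {0..1} \<Longrightarrow> (\<lambda>j. (-1)^j / fact (2*j+1) * (x*t)^(2*j+1)) sums sin (x*t)"
    by (rule sin_paired)
  note R = series_integral[OF s c b summable_odd_exp r]
  show "(\<lambda>j. integral {0..1} (\<lambda>x. r x * ((-1)^j / fact (2*j+1) * (x*t)^(2*j+1))))
           sums integral {0..1} (\<lambda>x. r x * sin (x*t))" by (rule R(1))
  show "(\<lambda>x. r x * sin (x*t)) integrable_on {0..1}" by (rule R(2))
qed

lemma cos_series_integral:
  fixes r :: "real \<Rightarrow> real"
  assumes r: "continuous_on {0..1} r"
  shows "(\<lambda>j. integral {0..1} (\<lambda>x. r x * ((-1)^j / fact (2*j) * (x*t)^(2*j))))
           sums integral {0..1} (\<lambda>x. r x * cos (x*t))"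
    and "(\<lambda>x. r x * cos (x*t)) integrable_on {0..1}"
proof -
  have b: "\<bar>(-1)^j / fact (2*j) * (x*t)^(2*j)\<bar> \<le> \<bar>t\<bar>^(2*j) / fact (2*j)"
    if "x \<in> {0..1}" for j x
    using pow_bound[OF that, of "(-1)^j / fact (2*j)" t "2*j"] by simp
  have c: "\<And>j. continuous_on {0..1} (\<lambda>x. (-1)^j / fact (2*j) * (x*t)^(2*j))"
    by (intro continuous_intros)
  have s: "\<And>x. x \<in> {0..1} \<Longrightarrow> (\<lambda>j. (-1)^j / fact (2*j) * (x*t)^(2*j)) sums cos (x*t)"
    by (rule cos_paired)
  note R = series_integral[OF s c b summable_even_exp r]
  show "(\<lambda>j. integral {0..1} (\<lambda>x. r x * ((-1)^j / fact (2*j) * (x*t)^(2*j))))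
           sums integral {0..1} (\<lambda>x. r x * cos (x*t))" by (rule R(1))
  show "(\<lambda>x. r x * cos (x*t)) integrable_on {0..1}" by (rule R(2))
qed




lemma poch_fact: "pochhammer (real m + 1) r = fact (m + r) / fact m"
proof -
  have "pochhammer (1::real) (m + r) = pochhammer 1 m * pochhammer (1 + real m) r"
    by (rule pochhammer_product')
  then show ?thesis by (simp add: pochhammer_fact[symmetric] add.commute)
qed

lemma poch_neg: "pochhammer (- real (l+n)) n = (-1)^n * (fact (l+n) / fact l)"
proof -
  have "pochhammer (- real (l+n)) n = (-1)^n * pochhammer (real (l+n) - real n + 1) n"
    by (rule pochhammer_minus)
  also have "real (l+n) - real n + 1 = real l + 1" by simp
  finally show ?thesis by (simp add: poch_fact)
qed

lemma poch_zero: "j < n \<Longrightarrow> pochhammer (- real j) n = (0::real)"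
  by (auto simp: pochhammer_eq_0_iff)

lemma poch_double_fact:
  "pochhammer ((real m + 1)/2) l * pochhammer ((real m + 1)/2 + 1/2) l = fact (m + 2*l) / fact m / 4^l"
proof -
  have e: "2 * ((real m + 1)/2) = real m + 1" by simp
  have "pochhammer (real m + 1) (2*l) = of_nat (2^(2*l)) * pochhammer ((real m + 1)/2) l * pochhammer ((real m + 1)/2 + 1/2) l"
    using pochhammer_double[of "(real m + 1)/2" l] by (simp only: e)
  moreover have "(of_nat (2^(2*l)) :: real) = 4^l" by (simp add: power_mult)
  ultimately have "fact (m + 2*l) / fact m = 4^l * (pochhammer ((real m + 1)/2) l * pochhammer ((real m + 1)/2 + 1/2) l)"
    by (simp only: poch_fact mult.assoc)
  then show ?thesis by (simp add: field_simps)
qed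

lemma alg_id:
  fixes F B D G E q sl sn T X A :: real
  assumes "F \<noteq> 0" "B \<noteq> 0" "D \<noteq> 0" "G \<noteq> 0" "E \<noteq> 0" "q \<noteq> 0"
  shows "sl * sn / F * (T * X) * ((A / B) / (D / F)) = (T * (sn * G / E)) * ((A / G) / ((D / E / q) * B) * (sl * X / q))"
  using assms by (simp add: field_simps)

lemma Tval_p:
  fixes t :: real
  shows "(-1)^(l+n) / fact (2*(l+n)+1) * t^(2*(l+n)+1) * ((-1)^n * pochhammer (- real (l+n)) n / pochhammer (2 * real (l+n) + 2) (Suc n))
   = (t^(2*n+1) * ((-1)^n * fact n / fact (3*n+2))) *
     (pochhammer (real n + 1) l / (pochhammer ((3 * real n + 3)/2) l * pochhammer ((3 * real n + 4)/2) l * fact l) * (-(t^2)/4)^l)"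
proof -
  have a1: "2 * real (l+n) + 2 = real (2*(l+n)+1) + 1" by simp
  have a2: "2*(l+n)+1 + Suc n = 3*n+2+2*l" by simp
  have p1: "pochhammer (2 * real (l+n) + 2) (Suc n) = fact (3*n+2+2*l) / fact (2*(l+n)+1)"
    unfolding a1 poch_fact a2 ..
  have b1: "(3 * real n + 3)/2 = (real (3*n+2) + 1)/2" by simp
  have b2: "(3 * real n + 4)/2 = (real (3*n+2) + 1)/2 + 1/2" by (simp add: field_simps)
  have p2: "pochhammer ((3 * real n + 3)/2) l * pochhammer ((3 * real n + 4)/2) l = fact (3*n+2+2*l) / fact (3*n+2) / 4^l"
    unfolding b1 b2 poch_double_fact ..
  have p3: "pochhammer (real n + 1) l = fact (l+n) / fact n"
    using poch_fact[of n l] by (simp only: add.commute[of n l])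
  have p4: "(-(t^2)/4)^l = (-1)^l * t^(2*l) / 4^l"
  proof -
    have "(-(t^2)/4)^l = ((-1) * (t^2 / 4))^l" by simp
    also have "\<dots> = (-1)^l * ((t^2)^l / 4^l)" by (simp only: power_mult_distrib power_divide)
    also have "\<dots> = (-1)^l * t^(2*l) / 4^l" by (simp add: power_mult)
    finally show ?thesis .
  qed
  have p5: "t^(2*(l+n)+1) = t^(2*n+1) * t^(2*l)"
    by (simp add: power_add[symmetric] algebra_simps)
  have p6: "(-1::real)^(l+n) = (-1)^l * (-1)^n" by (simp add: power_add)
  have sn2: "(-1::real)^n * ((-1)^n * z) = z" for z
    by (simp add: mult.assoc[symmetric] power_mult_distrib[symmetric])
  have nz: "fact (3*n+2+2*l) \<noteq> (0::real)" "fact (2*(l+n)+1) \<noteq> (0::real)" "fact (3*n+2) \<noteq> (0::real)"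
     "fact n \<noteq> (0::real)" "fact l \<noteq> (0::real)" "(4::real)^l \<noteq> 0" by auto
  show ?thesis
    unfolding p1 p2 p3 p4 p5 p6 poch_neg sn2
    by (rule alg_id[OF nz(2) nz(5) nz(1) nz(4) nz(3) nz(6)])
qed

lemma Tval_q:
  fixes t :: real
  shows "(-1)^(l+n) / fact (2*(l+n)) * t^(2*(l+n)) * ((-1)^n * pochhammer (- real (l+n)) n / pochhammer (2 * real (l+n) + 1) (Suc n))
   = (t^(2*n) * ((-1)^n * fact n / fact (3*n+1))) *
     (pochhammer (real n + 1) l / (pochhammer ((3 * real n + 2)/2) l * pochhammer ((3 * real n + 3)/2) l * fact l) * (-(t^2)/4)^l)"
proof -
  have a1: "2 * real (l+n) + 1 = real (2*(l+n)) + 1" by simp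
  have a2: "2*(l+n) + Suc n = 3*n+1+2*l" by simp
  have p1: "pochhammer (2 * real (l+n) + 1) (Suc n) = fact (3*n+1+2*l) / fact (2*(l+n))"
    unfolding a1 poch_fact a2 ..
  have b1: "(3 * real n + 2)/2 = (real (3*n+1) + 1)/2" by simp
  have b2: "(3 * real n + 3)/2 = (real (3*n+1) + 1)/2 + 1/2" by (simp add: field_simps)
  have p2: "pochhammer ((3 * real n + 2)/2) l * pochhammer ((3 * real n + 3)/2) l = fact (3*n+1+2*l) / fact (3*n+1) / 4^l"
    unfolding b1 b2 poch_double_fact ..
  have p3: "pochhammer (real n + 1) l = fact (l+n) / fact n"
    using poch_fact[of n l] by (simp only: add.commute[of n l])
  have p4: "(-(t^2)/4)^l = (-1)^l * t^(2*l) / 4^l"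
  proof -
    have "(-(t^2)/4)^l = ((-1) * (t^2 / 4))^l" by simp
    also have "\<dots> = (-1)^l * ((t^2)^l / 4^l)" by (simp only: power_mult_distrib power_divide)
    also have "\<dots> = (-1)^l * t^(2*l) / 4^l" by (simp add: power_mult)
    finally show ?thesis .
  qed
  have p5: "t^(2*(l+n)) = t^(2*n) * t^(2*l)"
    by (simp add: power_add[symmetric] algebra_simps)
  have p6: "(-1::real)^(l+n) = (-1)^l * (-1)^n" by (simp add: power_add)
  have sn2: "(-1::real)^n * ((-1)^n * z) = z" for z
    by (simp add: mult.assoc[symmetric] power_mult_distrib[symmetric])
  have nz: "fact (3*n+1+2*l) \<noteq> (0::real)" "fact (2*(l+n)) \<noteq> (0::real)" "fact (3*n+1) \<noteq> (0::real)"
     "fact n \<noteq> (0::real)" "fact l \<noteq> (0::real)" "(4::real)^l \<noteq> 0" by auto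
  show ?thesis
    unfolding p1 p2 p3 p4 p5 p6 poch_neg sn2
    by (rule alg_id[OF nz(2) nz(5) nz(1) nz(4) nz(3) nz(6)])
qed




lemma cont_p: "continuous_on {0..1} (alpert_p n)"
  unfolding alpert_p_def by (intro continuous_intros)

lemma cont_q: "continuous_on {0..1} (alpert_q n)"
  unfolding alpert_q_def by (intro continuous_intros)

lemma LP:
  fixes t :: real
  shows "((\<lambda>x. alpert_p n x * sin (x*t)) has_integral
     (t^(2*n+1) * ((-1)^n * fact n / fact (3*n+2)) *
       hyp1F2 (real n + 1) ((3 * real n + 3)/2) ((3 * real n + 4)/2) (-(t^2)/4))) {0..1}"
proof -
  note S = sin_series_integral[OF cont_p, of n t]
  define I where "I = integral {0..1} (\<lambda>x. alpert_p n x * sin (x*t))"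
  define T where "T j = (-1)^j / fact (2*j+1) * t^(2*j+1) * ((-1)^n * pochhammer (- real j) n / pochhammer (2 * real j + 2) (Suc n))" for j
  define C where "C = t^(2*n+1) * ((-1)^n * fact n / fact (3*n+2))"
  define H where "H l = pochhammer (real n + 1) l / (pochhammer ((3 * real n + 3)/2) l * pochhammer ((3 * real n + 4)/2) l * fact l) * (-(t^2)/4)^l" for l
  have intj: "integral {0..1} (\<lambda>x. alpert_p n x * ((-1)^j / fact (2*j+1) * (x*t)^(2*j+1))) = T j" for j
  proof -
    have m: "((\<lambda>x. alpert_p n x * x^(2*j+1)) has_integral ((-1)^n * pochhammer (- real j) n / pochhammer (2 * real j + 2) (Suc n))) {0..1}"
      using mom_p[of n "2*j+1"] mom_p_val[of n j] by (simp add: add.assoc)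
    have "((\<lambda>x. ((-1)^j / fact (2*j+1) * t^(2*j+1)) * (alpert_p n x * x^(2*j+1))) has_integral T j) {0..1}"
      unfolding T_def by (rule has_integral_mult_right[OF m])
    moreover have "(\<lambda>x. ((-1)^j / fact (2*j+1) * t^(2*j+1)) * (alpert_p n x * x^(2*j+1)))
        = (\<lambda>x. alpert_p n x * ((-1)^j / fact (2*j+1) * (x*t)^(2*j+1)))"
      by (simp add: power_mult_distrib mult_ac)
    ultimately show ?thesis by (metis integral_unique)
  qed
  have Ts: "T sums I" using S(1) unfolding intj I_def .
  have zero: "\<And>j. j < n \<Longrightarrow> T j = 0" by (simp add: T_def poch_zero)
  have shift: "(\<lambda>l. T (l+n)) sums I" using Ts sums_zero_iff_shift[of n T I, OF zero] by simp
  have TH: "T (l+n) = C * H l" for l unfolding T_def C_def H_def by (rule Tval_p)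
  have shift': "(\<lambda>l. C * H l) sums I" using shift unfolding TH .
  have hyp: "hyp1F2 (real n + 1) ((3 * real n + 3)/2) ((3 * real n + 4)/2) (-(t^2)/4) = suminf H"
    unfolding hyp1F2_def H_def ..
  have IC: "I = C * suminf H"
  proof (cases "t = 0")
    case True
    then have "C = 0" by (simp add: C_def)
    then have "(\<lambda>l. C * H l) sums 0" by simp
    then have "I = 0" by (rule sums_unique2[OF shift'])
    then show ?thesis using \<open>C = 0\<close> by simp
  next
    case False
    then have "C \<noteq> 0" by (simp add: C_def)
    then have "H sums (I / C)" using shift' sums_mult_iff[of C H "I / C"] by simp
    from sums_unique[OF this] have "suminf H = I / C" by simp
    then show ?thesis using \<open>C \<noteq> 0\<close> by simp
  qed
  have "((\<lambda>x. alpert_p n x * sin (x*t)) has_integral I) {0..1}"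
    unfolding I_def using S(2) by (rule integrable_integral)
  then show ?thesis unfolding IC hyp C_def .
qed

lemma LQ:
  fixes t :: real
  shows "((\<lambda>x. alpert_q n x * cos (x*t)) has_integral
     (t^(2*n) * ((-1)^n * fact n / fact (3*n+1)) *
       hyp1F2 (real n + 1) ((3 * real n + 2)/2) ((3 * real n + 3)/2) (-(t^2)/4))) {0..1}"
proof -
  note S = cos_series_integral[OF cont_q, of n t]
  define I where "I = integral {0..1} (\<lambda>x. alpert_q n x * cos (x*t))"
  define T where "T j = (-1)^j / fact (2*j) * t^(2*j) * ((-1)^n * pochhammer (- real j) n / pochhammer (2 * real j + 1) (Suc n))" for j
  define C where "C = t^(2*n) * ((-1)^n * fact n / fact (3*n+1))"
  define H where "H l = pochhammer (real n + 1) l / (pochhammer ((3 * real n + 2)/2) l * pochhammer ((3 * real n + 3)/2) l * fact l) * (-(t^2)/4)^l" for l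
  have intj: "integral {0..1} (\<lambda>x. alpert_q n x * ((-1)^j / fact (2*j) * (x*t)^(2*j))) = T j" for j
  proof -
    have m: "((\<lambda>x. alpert_q n x * x^(2*j)) has_integral ((-1)^n * pochhammer (- real j) n / pochhammer (2 * real j + 1) (Suc n))) {0..1}"
      using mom_q[of n "2*j"] mom_q_val[of n j] by simp
    have "((\<lambda>x. ((-1)^j / fact (2*j) * t^(2*j)) * (alpert_q n x * x^(2*j))) has_integral T j) {0..1}"
      unfolding T_def by (rule has_integral_mult_right[OF m])
    moreover have "(\<lambda>x. ((-1)^j / fact (2*j) * t^(2*j)) * (alpert_q n x * x^(2*j)))
        = (\<lambda>x. alpert_q n x * ((-1)^j / fact (2*j) * (x*t)^(2*j)))"
      by (simp add: power_mult_distrib mult_ac)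
    ultimately show ?thesis by (metis integral_unique)
  qed
  have Ts: "T sums I" using S(1) unfolding intj I_def .
  have zero: "\<And>j. j < n \<Longrightarrow> T j = 0" by (simp add: T_def poch_zero)
  have shift: "(\<lambda>l. T (l+n)) sums I" using Ts sums_zero_iff_shift[of n T I, OF zero] by simp
  have TH: "T (l+n) = C * H l" for l unfolding T_def C_def H_def by (rule Tval_q)
  have shift': "(\<lambda>l. C * H l) sums I" using shift unfolding TH .
  have hyp: "hyp1F2 (real n + 1) ((3 * real n + 2)/2) ((3 * real n + 3)/2) (-(t^2)/4) = suminf H"
    unfolding hyp1F2_def H_def ..
  have IC: "I = C * suminf H"
  proof (cases "t = 0 \<and> n > 0")
    case True
    then have "C = 0" by (simp add: C_def)
    then have "(\<lambda>l. C * H l) sums 0" by simp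
    then have "I = 0" by (rule sums_unique2[OF shift'])
    then show ?thesis using \<open>C = 0\<close> by simp
  next
    case False
    then have "C \<noteq> 0" by (auto simp: C_def)
    then have "H sums (I / C)" using shift' sums_mult_iff[of C H "I / C"] by simp
    from sums_unique[OF this] have "suminf H = I / C" by simp
    then show ?thesis using \<open>C \<noteq> 0\<close> by simp
  qed
  have "((\<lambda>x. alpert_q n x * cos (x*t)) has_integral I) {0..1}"
    unfolding I_def using S(2) by (rule integrable_integral)
  then show ?thesis unfolding IC hyp C_def .
qed




lemma reflect_integral:
  fixes F g h :: "real \<Rightarrow> complex"
  assumes gi: "g integrable_on {0..1}" and hi: "h integrable_on {0..1}"
    and Fg: "\<And>x. x \<in> {0<..<1} \<Longrightarrow> F x = g x"
    and Fh: "\<And>x. x \<in> {0<..<1} \<Longrightarrow> F (-x) = h x"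
    and J: "((\<lambda>x. g x + h x) has_integral J) {0..1}"
  shows "(F has_integral J) {-1..1}"
proof -
  have hg: "(F has_integral integral {0..1} g) {0..1}"
    by (rule has_integral_spike_finite[of "{0,1}" _ _ g]) (auto intro: Fg simp: integrable_integral[OF gi])
  have hh: "((\<lambda>x. F (-x)) has_integral integral {0..1} h) {0..1}"
    by (rule has_integral_spike_finite[of "{0,1}" _ _ h]) (auto intro: Fh simp: integrable_integral[OF hi])
  have iff: "((\<lambda>x. F (-x)) has_integral integral {0..1} h) {0..1} \<longleftrightarrow> (F has_integral integral {0..1} h) {-1..0}"
    using has_integral_reflect_real[of F "integral {0..1} h" 0 "-1"] by (simp only: minus_zero minus_minus)
  have hh': "(F has_integral integral {0..1} h) {-1..0}" using iff hh by blast
  have "(F has_integral (integral {0..1} h + integral {0..1} g)) {-1..1}"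
    by (rule has_integral_combine[OF _ _ hh' hg]) auto
  moreover have "integral {0..1} h + integral {0..1} g = J"
    using integral_add[OF gi hi] integral_unique[OF J] by simp
  ultimately show ?thesis by simp
qed

lemma exp_diff_sin: "exp (\<i> * complex_of_real (x*t)) - exp (\<i> * complex_of_real ((-x)*t)) = 2 * \<i> * complex_of_real (sin (x*t))"
proof -
  have a: "exp (\<i> * z) - exp (- (\<i> * z)) = 2 * \<i> * sin z" for z :: complex
    using sin_exp_eq[of z] by (simp add: field_simps)
  have b: "complex_of_real ((-x)*t) = - complex_of_real (x*t)" by simp
  show ?thesis unfolding b using a[of "complex_of_real (x*t)"] by (simp only: mult_minus_right sin_of_real)
qed

lemma exp_sum_cos: "exp (\<i> * complex_of_real (x*t)) + exp (\<i> * complex_of_real ((-x)*t)) = 2 * complex_of_real (cos (x*t))"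
proof -
  have a: "exp (\<i>*z) + exp (-(\<i>*z)) = 2*cos z" for z :: complex
    using cos_exp_eq[of z] by (simp add: field_simps)
  have b: "complex_of_real ((-x)*t) = - complex_of_real (x*t)" by simp
  show ?thesis unfolding b using a[of "complex_of_real (x*t)"] by (simp only: mult_minus_right cos_of_real)
qed


theorem mainTheorem12:
  fixes n :: nat and f :: "nat \<Rightarrow> real \<Rightarrow> real" and c :: real
  assumes alp: "alpert_multiwavelets (n + 1) f"
    and hc: "\<forall>x\<in>{0<..<1}. f (n + 1) x = c * alpert_p n x"
  shows "(\<forall>t::real. integral {-1..1} (\<lambda>x. complex_of_real (f (n + 1) x) * exp (\<i> * complex_of_real (x * t)))
            = 2 * \<i> * complex_of_real (c * t ^ (2 * n + 1) * ((-1) ^ n * fact n / fact (3 * n + 2))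
                * hyp1F2 (real n + 1) ((3 * real n + 3) / 2) ((3 * real n + 4) / 2) (- (t ^ 2) / 4)))
       \<and> (\<forall>d::real. n \<ge> 1 \<longrightarrow> (\<forall>x\<in>{0<..<1}. f n x = d * alpert_q n x) \<longrightarrow>
           (\<forall>t::real. integral {-1..1} (\<lambda>x. complex_of_real (f n x) * exp (\<i> * complex_of_real (x * t)))
            = complex_of_real (2 * d * t ^ (2 * n) * ((-1) ^ n * fact n / fact (3 * n + 1))
                * hyp1F2 (real n + 1) ((3 * real n + 2) / 2) ((3 * real n + 3) / 2) (- (t ^ 2) / 4))))"
proof -
  have P3: "\<And>k y. k \<in> {1..n+1} \<Longrightarrow> y \<in> {0<..<1} \<Longrightarrow> f k (-y) = (-1)^(k + (n+1) - 1) * f k y"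
    using alp unfolding alpert_multiwavelets_def by blast
  have par1: "f (n+1) (-y) = - f (n+1) y" if "y \<in> {0<..<1}" for y
  proof -
    have e: "n + 1 + (n + 1) - 1 = Suc (2*n)" by simp
    show ?thesis using P3[of "n+1" y] that unfolding e by simp
  qed
  have par2: "f n (-y) = f n y" if "y \<in> {0<..<1}" "n \<ge> 1" for y
  proof -
    have e: "n + (n + 1) - 1 = 2*n" by simp
    show ?thesis using P3[of n y] that unfolding e by simp
  qed
  have main1: "integral {-1..1} (\<lambda>x. complex_of_real (f (n + 1) x) * exp (\<i> * complex_of_real (x * t)))
            = 2 * \<i> * complex_of_real (c * t ^ (2 * n + 1) * ((-1) ^ n * fact n / fact (3 * n + 2))
                * hyp1F2 (real n + 1) ((3 * real n + 3) / 2) ((3 * real n + 4) / 2) (- (t ^ 2) / 4))" for t :: real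
  proof -
    define S where "S = t^(2*n+1) * ((-1)^n * fact n / fact (3*n+2)) *
       hyp1F2 (real n + 1) ((3 * real n + 3)/2) ((3 * real n + 4)/2) (-(t^2)/4)"
    have LPt: "((\<lambda>x. alpert_p n x * sin (x*t)) has_integral S) {0..1}" unfolding S_def by (rule LP)
    have "((\<lambda>x. complex_of_real (f (n+1) x) * exp (\<i> * complex_of_real (x*t))) has_integral (2*\<i>*complex_of_real (c*S))) {-1..1}"
    proof (rule reflect_integral[where g = "\<lambda>x. complex_of_real (c * alpert_p n x) * exp (\<i> * complex_of_real (x*t))"
          and h = "\<lambda>x. complex_of_real (-(c * alpert_p n x)) * exp (\<i> * complex_of_real ((-x)*t))"])
      show "(\<lambda>x. complex_of_real (c * alpert_p n x) * exp (\<i> * complex_of_real (x*t))) integrable_on {0..1}"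
        unfolding alpert_p_def by (intro integrable_continuous_real continuous_intros)
      show "(\<lambda>x. complex_of_real (-(c * alpert_p n x)) * exp (\<i> * complex_of_real ((-x)*t))) integrable_on {0..1}"
        unfolding alpert_p_def by (intro integrable_continuous_real continuous_intros)
      show "complex_of_real (f (n+1) x) * exp (\<i> * complex_of_real (x*t)) = complex_of_real (c * alpert_p n x) * exp (\<i> * complex_of_real (x*t))"
        if "x \<in> {0<..<1}" for x using hc that by simp
      show "complex_of_real (f (n+1) (-x)) * exp (\<i> * complex_of_real ((-x)*t)) = complex_of_real (-(c * alpert_p n x)) * exp (\<i> * complex_of_real ((-x)*t))"
        if "x \<in> {0<..<1}" for x using hc that par1[OF that] by simp
      have pt: "complex_of_real (c * alpert_p n x) * exp (\<i> * complex_of_real (x*t)) + complex_of_real (-(c * alpert_p n x)) * exp (\<i> * complex_of_real ((-x)*t))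
          = 2 * \<i> * complex_of_real (c * (alpert_p n x * sin (x*t)))" for x
      proof -
        have "complex_of_real (c * alpert_p n x) * exp (\<i> * complex_of_real (x*t)) + complex_of_real (-(c * alpert_p n x)) * exp (\<i> * complex_of_real ((-x)*t))
            = complex_of_real (c * alpert_p n x) * (exp (\<i> * complex_of_real (x*t)) - exp (\<i> * complex_of_real ((-x)*t)))"
          by (simp only: of_real_minus right_diff_distrib mult_minus_left) simp
        also have "\<dots> = complex_of_real (c * alpert_p n x) * (2 * \<i> * complex_of_real (sin (x*t)))"
          by (simp only: exp_diff_sin)
        also have "\<dots> = 2 * \<i> * complex_of_real (c * (alpert_p n x * sin (x*t)))"
          by (simp add: mult_ac)
        finally show ?thesis .
      qed
      show "((\<lambda>x. complex_of_real (c * alpert_p n x) * exp (\<i> * complex_of_real (x*t)) + complex_of_real (-(c * alpert_p n x)) * exp (\<i> * complex_of_real ((-x)*t)))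
          has_integral (2*\<i>*complex_of_real (c*S))) {0..1}"
        unfolding pt
        by (intro has_integral_mult_right has_integral_of_real LPt)
    qed
    then have "integral {-1..1} (\<lambda>x. complex_of_real (f (n+1) x) * exp (\<i> * complex_of_real (x*t))) = 2*\<i>*complex_of_real (c*S)"
      by (rule integral_unique)
    then show ?thesis unfolding S_def by (simp only: mult.assoc)
  qed
  have main2: "integral {-1..1} (\<lambda>x. complex_of_real (f n x) * exp (\<i> * complex_of_real (x * t)))
            = complex_of_real (2 * d * t ^ (2 * n) * ((-1) ^ n * fact n / fact (3 * n + 1))
                * hyp1F2 (real n + 1) ((3 * real n + 2) / 2) ((3 * real n + 3) / 2) (- (t ^ 2) / 4))"
    if n1: "n \<ge> 1" and hd: "\<forall>x\<in>{0<..<1}. f n x = d * alpert_q n x" for t d :: real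
  proof -
    define S where "S = t^(2*n) * ((-1)^n * fact n / fact (3*n+1)) *
       hyp1F2 (real n + 1) ((3 * real n + 2)/2) ((3 * real n + 3)/2) (-(t^2)/4)"
    have LQt: "((\<lambda>x. alpert_q n x * cos (x*t)) has_integral S) {0..1}" unfolding S_def by (rule LQ)
    have "((\<lambda>x. complex_of_real (f n x) * exp (\<i> * complex_of_real (x*t))) has_integral (2*complex_of_real (d*S))) {-1..1}"
    proof (rule reflect_integral[where g = "\<lambda>x. complex_of_real (d * alpert_q n x) * exp (\<i> * complex_of_real (x*t))"
          and h = "\<lambda>x. complex_of_real (d * alpert_q n x) * exp (\<i> * complex_of_real ((-x)*t))"])
      show "(\<lambda>x. complex_of_real (d * alpert_q n x) * exp (\<i> * complex_of_real (x*t))) integrable_on {0..1}"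
        unfolding alpert_q_def by (intro integrable_continuous_real continuous_intros)
      show "(\<lambda>x. complex_of_real (d * alpert_q n x) * exp (\<i> * complex_of_real ((-x)*t))) integrable_on {0..1}"
        unfolding alpert_q_def by (intro integrable_continuous_real continuous_intros)
      show "complex_of_real (f n x) * exp (\<i> * complex_of_real (x*t)) = complex_of_real (d * alpert_q n x) * exp (\<i> * complex_of_real (x*t))"
        if "x \<in> {0<..<1}" for x using hd that by simp
      show "complex_of_real (f n (-x)) * exp (\<i> * complex_of_real ((-x)*t)) = complex_of_real (d * alpert_q n x) * exp (\<i> * complex_of_real ((-x)*t))"
        if "x \<in> {0<..<1}" for x using hd that par2[OF that n1] by simp
      have pt: "complex_of_real (d * alpert_q n x) * exp (\<i> * complex_of_real (x*t)) + complex_of_real (d * alpert_q n x) * exp (\<i> * complex_of_real ((-x)*t))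
          = 2 * complex_of_real (d * (alpert_q n x * cos (x*t)))" for x
      proof -
        have "complex_of_real (d * alpert_q n x) * exp (\<i> * complex_of_real (x*t)) + complex_of_real (d * alpert_q n x) * exp (\<i> * complex_of_real ((-x)*t))
            = complex_of_real (d * alpert_q n x) * (exp (\<i> * complex_of_real (x*t)) + exp (\<i> * complex_of_real ((-x)*t)))"
          by (simp only: distrib_left)
        also have "\<dots> = complex_of_real (d * alpert_q n x) * (2 * complex_of_real (cos (x*t)))"
          by (simp only: exp_sum_cos)
        also have "\<dots> = 2 * complex_of_real (d * (alpert_q n x * cos (x*t)))"
          by (simp add: mult_ac)
        finally show ?thesis .
      qed
      show "((\<lambda>x. complex_of_real (d * alpert_q n x) * exp (\<i> * complex_of_real (x*t)) + complex_of_real (d * alpert_q n x) * exp (\<i> * complex_of_real ((-x)*t)))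
          has_integral (2*complex_of_real (d*S))) {0..1}"
        unfolding pt
        by (intro has_integral_mult_right has_integral_of_real LQt)
    qed
    then have "integral {-1..1} (\<lambda>x. complex_of_real (f n x) * exp (\<i> * complex_of_real (x*t))) = 2*complex_of_real (d*S)"
      by (rule integral_unique)
    then show ?thesis unfolding S_def by (simp add: mult.assoc)
  qed
  show ?thesis using main1 main2 by blast
qed

end
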